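(* Let $(X,d,\mu)$ be a locally Ahlfors $Q$-regular metric measure space, $p>Q$, $N\in\mathbb{N}$, $E\subseteq X$ compact, and $\nu$ a finite nonzero Borel measure supported on $E$. Let $0<\alpha'<N$ and let $g\in N^{1,p}(X;\mathbb{R}^N)$ satisfy $$\iint|g(x)-g(y)|^{-\alpha'}\,d\nu(y)\,d\nu(x)<\infty.$$ Let $Z$ be the set of real $N\times N$ matrices all of whose entries have absolute value at most $1$, equipped with Lebesgue measure (as a subset of $\mathbb{R}^{N^2}$). Then for every $f_0\in N^{1,p}(X;\mathbb{R}^N)$, the map $f_L=f_0+Lg$ satisfies $\dim f_L(E)\ge\alpha'$ for almost every $L\in Z$.
   Context: Locally Ahlfors $Q$-regular: for every compact $K\subseteq X$ there are $R>0$, $C\ge1$ with $r^Q/C\le\mu(B(x,r))\le Cr^Q$ for $x\in K$, $0<r<R$. $N^{1,p}(X;\mathbb{R}^N)$ is the Newtonian–Sobolev space of maps in $L^p(X;\mathbb{R}^N)$ having an upper gradient in $L^p(X)$ (a Borel $h\ge0$ is an upper gradient of $f$ if $|f(\gamma(0))-f(\gamma(1))|\le\int_\gamma h\,ds$ for every rectifiable curve $\gamma$); maps are evaluated pointwise via fixed representatives. $\dim$ is Hausdorff dimension. *)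

theory Defs
  imports "HOL-Analysis.Analysis"
begin

definition locally_ahlfors_regular :: "'a::metric_space measure \<Rightarrow> real \<Rightarrow> bool" where
  "locally_ahlfors_regular \<mu> Q \<longleftrightarrow>
     (\<forall>K. compact K \<longrightarrow>
        (\<exists>R>0. \<exists>C\<ge>1. \<forall>x\<in>K. \<forall>r. 0 < r \<and> r < R \<longrightarrow>
            ennreal (r powr Q / C) \<le> emeasure \<mu> (ball x r) \<and>
            emeasure \<mu> (ball x r) \<le> ennreal (C * r powr Q)))"

definition curve_length :: "(real \<Rightarrow> 'a::metric_space) \<Rightarrow> real \<Rightarrow> real \<Rightarrow> ennreal" where
  "curve_length \<gamma> a b =
     (SUP (n, t) \<in> {(n::nat, t::nat \<Rightarrow> real). t 0 = a \<and> t n = b \<and> (\<forall>i<n. t i \<le> t (Suc i))}.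
        (\<Sum>i<n. ennreal (dist (\<gamma> (t i)) (\<gamma> (t (Suc i))))))"

definition rectifiable_curve :: "(real \<Rightarrow> 'a::metric_space) \<Rightarrow> bool" where
  "rectifiable_curve \<gamma> \<longleftrightarrow> continuous_on {0..1} \<gamma> \<and> curve_length \<gamma> 0 1 < \<infinity>"

definition length_fun :: "(real \<Rightarrow> 'a::metric_space) \<Rightarrow> real \<Rightarrow> real" where
  "length_fun \<gamma> t = enn2real (curve_length \<gamma> 0 (max 0 (min t 1)))"

text \<open>Line integral of a nonnegative function along a rectifiable curve w.r.t. arc length,
  realised as the Lebesgue--Stieltjes integral with respect to the length function.\<close>
definition line_integral :: "('a::metric_space \<Rightarrow> ennreal) \<Rightarrow> (real \<Rightarrow> 'a) \<Rightarrow> ennreal" where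
  "line_integral h \<gamma> = (\<integral>\<^sup>+ t. h (\<gamma> t) \<partial>interval_measure (length_fun \<gamma>))"

definition upper_gradient ::
    "('a::metric_space \<Rightarrow> 'b::real_normed_vector) \<Rightarrow> ('a \<Rightarrow> ennreal) \<Rightarrow> bool" where
  "upper_gradient f h \<longleftrightarrow> h \<in> borel_measurable borel \<and>
     (\<forall>\<gamma>. rectifiable_curve \<gamma> \<longrightarrow>
        ennreal (norm (f (\<gamma> 0) - f (\<gamma> 1))) \<le> line_integral h \<gamma>)"

definition ennpow :: "ennreal \<Rightarrow> real \<Rightarrow> ennreal" where
  "ennpow x p = (if x = \<infinity> then \<infinity> else ennreal (enn2real x powr p))"

definition newtonian :: "'a::metric_space measure \<Rightarrow> real \<Rightarrow> ('a \<Rightarrow> 'b::euclidean_space) set" where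
  "newtonian \<mu> p = {f. f \<in> borel_measurable \<mu> \<and>
       (\<integral>\<^sup>+ x. ennreal (norm (f x) powr p) \<partial>\<mu>) < \<infinity> \<and>
       (\<exists>h. upper_gradient f h \<and> (\<integral>\<^sup>+ x. ennpow (h x) p \<partial>\<mu>) < \<infinity>)}"

definition haus_cost :: "real \<Rightarrow> 'a::metric_space set \<Rightarrow> ennreal" where
  "haus_cost s U = (if U = {} then 0 else if \<not> bounded U then \<infinity>
                    else if s = 0 then 1 else ennreal (diameter U powr s))"

definition hausdorff_content :: "real \<Rightarrow> real \<Rightarrow> 'a::metric_space set \<Rightarrow> ennreal" where
  "hausdorff_content s \<delta> A =
     (INF C \<in> {C :: nat \<Rightarrow> 'a set. A \<subseteq> (\<Union>i. C i) \<and> (\<forall>i. bounded (C i) \<and> diameter (C i) \<le> \<delta>)}.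
        (\<Sum>i. haus_cost s (C i)))"

definition hausdorff_measure :: "real \<Rightarrow> 'a::metric_space set \<Rightarrow> ennreal" where
  "hausdorff_measure s A = (SUP \<delta> \<in> {0<..}. hausdorff_content s \<delta> A)"

definition hausdorff_dim :: "'a::metric_space set \<Rightarrow> ereal" where
  "hausdorff_dim A = Inf (ereal ` {s. 0 \<le> s \<and> hausdorff_measure s A = 0})"

end

theory Submission
  imports Defs
begin

definition kern :: "real \<Rightarrow> 'b::real_normed_vector \<Rightarrow> ennreal" where
  "kern \<alpha> u = (if u = 0 then \<infinity> else ennreal (norm u powr (- \<alpha>)))"

lemma kern_measurable[measurable]: "kern \<alpha> \<in> borel_measurable (borel :: 'b::euclidean_space measure)"
  unfolding kern_def by measurable

lemma ball_bound:
  fixes \<nu> :: "'a measure" and F :: "'a \<Rightarrow> 'b::euclidean_space"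
  assumes fin: "finite_measure \<nu>"
    and Fm[measurable]: "F \<in> borel_measurable \<nu>" and \<alpha>: "0 < \<alpha>"
    and Px: "(\<integral>\<^sup>+y. kern \<alpha> (F x - F y) \<partial>\<nu>) \<le> ennreal M" and d: "0 \<le> d"
  shows "emeasure \<nu> {y\<in>space \<nu>. dist (F y) (F x) \<le> d} \<le> ennreal M * ennreal (d powr \<alpha>)"
proof -
  let ?S = "{y\<in>space \<nu>. dist (F y) (F x) \<le> d}"
  have Sm: "?S \<in> sets \<nu>" by measurable
  show ?thesis
  proof (cases "d = 0")
    case True
    have "(\<integral>\<^sup>+y. \<infinity> * indicator ?S y \<partial>\<nu>) \<le> (\<integral>\<^sup>+y. kern \<alpha> (F x - F y) \<partial>\<nu>)"
      by (intro nn_integral_mono) (auto simp: kern_def True indicator_def)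
    also have "\<dots> < \<infinity>" using Px by (simp add: le_less_trans)
    finally have "\<infinity> * emeasure \<nu> ?S < \<infinity>" using Sm by (simp add: nn_integral_cmult_indicator)
    then have "emeasure \<nu> ?S = 0"
      by (metis ennreal_mult_eq_top_iff infinity_ennreal_def less_irrefl)
    then show ?thesis by simp
  next
    case False
    then have dp: "d > 0" using d by simp
    have "(\<integral>\<^sup>+y. ennreal (d powr (-\<alpha>)) * indicator ?S y \<partial>\<nu>) \<le> (\<integral>\<^sup>+y. kern \<alpha> (F x - F y) \<partial>\<nu>)"
    proof (intro nn_integral_mono)
      fix y assume "y \<in> space \<nu>"
      show "ennreal (d powr (-\<alpha>)) * indicator ?S y \<le> kern \<alpha> (F x - F y)"
      proof (cases "y \<in> ?S")
        case True
        show ?thesis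
        proof (cases "F x - F y = 0")
          case True then show ?thesis by (simp add: kern_def)
        next
          case False
          have "norm (F x - F y) \<le> d" using \<open>y \<in> ?S\<close> by (simp add: dist_norm norm_minus_commute)
          then have "d powr (-\<alpha>) \<le> norm (F x - F y) powr (-\<alpha>)"
            using False \<alpha> by (intro powr_mono2') auto
          then show ?thesis using True False by (simp add: kern_def)
        qed
      qed simp
    qed
    also have "\<dots> \<le> ennreal M" by (rule Px)
    finally have 1: "ennreal (d powr (-\<alpha>)) * emeasure \<nu> ?S \<le> ennreal M"
      using Sm by (simp add: nn_integral_cmult_indicator)
    have "emeasure \<nu> ?S = ennreal (d powr \<alpha>) * (ennreal (d powr (-\<alpha>)) * emeasure \<nu> ?S)"
      using dp by (simp add: mult.assoc[symmetric] ennreal_mult'[symmetric] powr_add[symmetric])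
    also have "\<dots> \<le> ennreal (d powr \<alpha>) * ennreal M" using 1 by (intro mult_left_mono) auto
    finally show ?thesis by (simp add: mult.commute)
  qed
qed


lemma cover_bound:
  fixes \<nu> :: "'a measure" and F :: "'a \<Rightarrow> 'b::euclidean_space"
  assumes fin: "finite_measure \<nu>"
    and Fm[measurable]: "F \<in> borel_measurable \<nu>" and \<alpha>: "0 < \<alpha>" and s: "0 \<le> s" "s \<le> \<alpha>"
    and Gsub: "G \<subseteq> space \<nu>" and Gm: "G \<in> sets \<nu>"
    and GP: "\<And>x. x \<in> G \<Longrightarrow> (\<integral>\<^sup>+y. kern \<alpha> (F x - F y) \<partial>\<nu>) \<le> ennreal M"
    and cov: "F ` G \<subseteq> (\<Union>i. C i)" and bd: "\<And>i. bounded (C i)" and dm: "\<And>i. diameter (C i) \<le> 1"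
  shows "emeasure \<nu> G \<le> ennreal M * (\<Sum>i. haus_cost s (C i))"
proof -
  define x where "x i = (SOME x. x \<in> G \<and> F x \<in> C i)" for i
  define S where "S i = (if \<exists>x\<in>G. F x \<in> C i then {y\<in>space \<nu>. dist (F y) (F (x i)) \<le> diameter (C i)} else {})" for i
  have Sm: "S i \<in> sets \<nu>" for i unfolding S_def by (cases "\<exists>x\<in>G. F x \<in> C i") simp_all
  have "G \<subseteq> (\<Union>i. S i)"
  proof
    fix y assume y: "y \<in> G"
    then obtain i where i: "F y \<in> C i" using cov by blast
    then have ex: "\<exists>x\<in>G. F x \<in> C i" using y by blast
    then have xi: "x i \<in> G \<and> F (x i) \<in> C i" unfolding x_def by (metis (mono_tags, lifting) someI_ex)
    have "dist (F y) (F (x i)) \<le> diameter (C i)"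
      using diameter_bounded_bound[OF bd i] xi by auto
    then show "y \<in> (\<Union>i. S i)" using ex y Gsub unfolding S_def by auto
  qed
  then have "emeasure \<nu> G \<le> emeasure \<nu> (\<Union>i. S i)"
    using Sm by (intro emeasure_mono) auto
  also have "\<dots> \<le> (\<Sum>i. emeasure \<nu> (S i))"
    using Sm by (intro emeasure_subadditive_countably) auto
  also have "\<dots> \<le> (\<Sum>i. ennreal M * haus_cost s (C i))"
  proof (intro suminf_le allI summableI)
    fix i
    show "emeasure \<nu> (S i) \<le> ennreal M * haus_cost s (C i)"
    proof (cases "\<exists>x\<in>G. F x \<in> C i")
      case False then show ?thesis by (simp add: S_def)
    next
      case ex: True
      then have xi: "x i \<in> G \<and> F (x i) \<in> C i" unfolding x_def by (metis (mono_tags, lifting) someI_ex)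
      let ?d = "diameter (C i)"
      have d0: "0 \<le> ?d" by (simp add: diameter_ge_0 bd)
      have "emeasure \<nu> (S i) \<le> ennreal M * ennreal (?d powr \<alpha>)"
        using ball_bound[OF fin Fm \<alpha> GP[of "x i"] d0] xi ex by (simp add: S_def)
      also have "\<dots> \<le> ennreal M * haus_cost s (C i)"
      proof (intro mult_left_mono)
        have ne: "C i \<noteq> {}" using xi by auto
        show "ennreal (?d powr \<alpha>) \<le> haus_cost s (C i)"
        proof (cases "s = 0")
          case True
          have "?d powr \<alpha> \<le> 1" using d0 dm[of i] \<alpha> by (intro powr_le1) auto
          then show ?thesis using True ne bd by (simp add: haus_cost_def)
        next
          case False
          have "?d powr \<alpha> \<le> ?d powr s" using d0 dm[of i] s by (intro powr_mono') auto
          then show ?thesis using False ne bd by (simp add: haus_cost_def)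
        qed
      qed auto
      finally show ?thesis .
    qed
  qed
  also have "\<dots> = ennreal M * (\<Sum>i. haus_cost s (C i))" by simp
  finally show ?thesis .
qed


lemma mass_dist:
  fixes \<nu> :: "'a::topological_space measure" and F :: "'a \<Rightarrow> 'b::euclidean_space"
  assumes sets: "sets \<nu> = sets borel" and fin: "finite_measure \<nu>" and nz: "emeasure \<nu> (space \<nu>) \<noteq> 0"
    and E0: "emeasure \<nu> (UNIV - E) = 0" and cE: "closed E"
    and Fm: "F \<in> borel_measurable borel" and \<alpha>: "0 < \<alpha>"
    and I: "(\<integral>\<^sup>+x. (\<integral>\<^sup>+y. kern \<alpha> (F x - F y) \<partial>\<nu>) \<partial>\<nu>) < \<infinity>"
  shows "ereal \<alpha> \<le> hausdorff_dim (F ` E)"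
proof -
  interpret finite_measure \<nu> by fact
  have sp: "space \<nu> = UNIV" using sets_eq_imp_space_eq[OF sets] by simp
  have Fm'[measurable]: "F \<in> borel_measurable \<nu>" using Fm measurable_cong_sets[OF sets refl] by blast
  have Em[measurable]: "E \<in> sets \<nu>" using cE sets by simp
  define P where "P x = (\<integral>\<^sup>+y. kern \<alpha> (F x - F y) \<partial>\<nu>)" for x
  have Pm[measurable]: "P \<in> borel_measurable \<nu>" unfolding P_def by measurable
  have AEP: "AE x in \<nu>. P x \<noteq> \<infinity>" using nn_integral_PInf_AE[OF Pm] I unfolding P_def by auto
  then obtain N where N: "N \<in> null_sets \<nu>" "{x\<in>space \<nu>. \<not> P x \<noteq> \<infinity>} \<subseteq> N"
    by (auto simp: eventually_ae_filter)
  define G where "G n = E \<inter> {x. P x \<le> ennreal (real (Suc n))}" for n :: nat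
  have Gm[measurable]: "G n \<in> sets \<nu>" for n
  proof -
    have "G n = E \<inter> {x\<in>space \<nu>. P x \<le> ennreal (real (Suc n))}" using sp by (auto simp: G_def)
    also have "\<dots> \<in> sets \<nu>" by measurable
    finally show ?thesis .
  qed
  obtain n where Gn: "emeasure \<nu> (G n) \<noteq> 0"
  proof (rule ccontr)
    assume "\<not> thesis"
    then have all0: "\<And>n. emeasure \<nu> (G n) = 0" using that by blast
    have U0: "(\<Union>n. G n) \<in> null_sets \<nu>"
    proof -
      have "range G \<subseteq> sets \<nu>" using Gm by auto
      then have "emeasure \<nu> (\<Union>n. G n) = 0" using emeasure_UN_eq_0[of \<nu> G] all0 by blast
      then show ?thesis using Gm by (auto simp: null_sets_def)
    qed
    have "UNIV - E \<in> sets \<nu>" using sets.compl_sets[OF Em] sp by simp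
    then have E0': "UNIV - E \<in> null_sets \<nu>" using E0 by (simp add: null_sets_def)
    have "space \<nu> \<subseteq> (\<Union>n. G n) \<union> (UNIV - E) \<union> N"
    proof
      fix x assume x: "x \<in> space \<nu>"
      show "x \<in> (\<Union>n. G n) \<union> (UNIV - E) \<union> N"
      proof (cases "x \<in> E \<and> P x \<noteq> \<infinity>")
        case True
        then have "P x < top" by (simp add: top.not_eq_extremum)
        then obtain m where m: "P x < of_nat m" using ennreal_Ex_less_of_nat by blast
        have "(of_nat m :: ennreal) \<le> of_nat (Suc m)" by (rule of_nat_mono) simp
        then have "P x \<le> of_nat (Suc m)" using m by (meson less_imp_le order.trans)
        then have "P x \<le> ennreal (real (Suc m))" by (simp only: ennreal_of_nat_eq_real_of_nat)
        then show ?thesis using True by (auto simp: G_def)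
      next
        case False then show ?thesis using N x by auto
      qed
    qed
    moreover have NN: "(\<Union>n. G n) \<union> (UNIV - E) \<union> N \<in> null_sets \<nu>"
      using U0 E0' N(1) by (intro null_sets.Un)
    ultimately have "emeasure \<nu> (space \<nu>) \<le> emeasure \<nu> ((\<Union>n. G n) \<union> (UNIV - E) \<union> N)"
      by (intro emeasure_mono) (auto dest: null_setsD2)
    then have "emeasure \<nu> (space \<nu>) = 0" using NN by (simp add: null_setsD1)
    then show False using nz by simp
  qed
  define M where "M = real (Suc n)"
  have M: "0 < M" by (simp add: M_def)
  let ?c = "ennreal (1/M) * emeasure \<nu> (G n)"
  have cpos: "?c \<noteq> 0" using M Gn by simp
  have main: "?c \<le> hausdorff_content s 1 (F ` E)" if s: "0 \<le> s" "s \<le> \<alpha>" for s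
    unfolding hausdorff_content_def
  proof (rule INF_greatest)
    fix C :: "nat \<Rightarrow> 'b set" assume C: "C \<in> {C. F ` E \<subseteq> (\<Union>i. C i) \<and> (\<forall>i. bounded (C i) \<and> diameter (C i) \<le> 1)}"
    have "emeasure \<nu> (G n) \<le> ennreal M * (\<Sum>i. haus_cost s (C i))"
    proof (rule cover_bound[OF fin Fm' \<alpha> s])
      show "G n \<subseteq> space \<nu>" using sp by simp
      show "G n \<in> sets \<nu>" by simp
      show "\<And>x. x \<in> G n \<Longrightarrow> (\<integral>\<^sup>+y. kern \<alpha> (F x - F y) \<partial>\<nu>) \<le> ennreal M"
        by (auto simp: G_def M_def P_def)
      show "F ` G n \<subseteq> (\<Union>i. C i)" using C by (auto simp: G_def)
    qed (use C in auto)
    then have "?c \<le> ennreal (1/M) * (ennreal M * (\<Sum>i. haus_cost s (C i)))"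
      by (intro mult_left_mono) auto
    also have "\<dots> = (\<Sum>i. haus_cost s (C i))"
      using M by (simp add: mult.assoc[symmetric] ennreal_mult'[symmetric])
    finally show "?c \<le> (\<Sum>i. haus_cost s (C i))" .
  qed
  show ?thesis unfolding hausdorff_dim_def
  proof (rule Inf_greatest)
    fix t assume "t \<in> ereal ` {s. 0 \<le> s \<and> hausdorff_measure s (F ` E) = 0}"
    then obtain s where t: "t = ereal s" and s0: "0 \<le> s" and H: "hausdorff_measure s (F ` E) = 0" by auto
    show "ereal \<alpha> \<le> t"
    proof (rule ccontr)
      assume "\<not> ereal \<alpha> \<le> t"
      then have "s \<le> \<alpha>" using t by auto
      then have "?c \<le> hausdorff_content s 1 (F ` E)" using main s0 by blast
      also have "\<dots> \<le> hausdorff_measure s (F ` E)"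
        unfolding hausdorff_measure_def by (rule SUP_upper) auto
      finally show False using H cpos by simp
    qed
  qed
qed

lemma half_int:
  assumes b: "0 < \<beta>" "\<beta> < 1" and r: "0 \<le> r"
  shows "(\<integral>\<^sup>+u. kern \<beta> (u::real) * indicator {0..r} u \<partial>lborel) = ennreal (r powr (1-\<beta>) / (1-\<beta>))"
proof -
  have "(\<integral>\<^sup>+u. kern \<beta> (u::real) * indicator {0..r} u \<partial>lborel) =
        (\<integral>\<^sup>+u. ennreal (u powr (-\<beta>)) * indicator {0..r} u \<partial>lborel)"
  proof (rule nn_integral_cong_AE)
    show "AE u in lborel. kern \<beta> (u::real) * indicator {0..r} u = ennreal (u powr (-\<beta>)) * indicator {0..r} u"
      using AE_lborel_singleton[of "0::real"]
      by eventually_elim (auto simp: kern_def indicator_def)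
  qed
  also have "\<dots> = ennreal (r powr (-\<beta>+1) / (-\<beta>+1))"
    by (rule nn_integral_has_integral_lebesgue') (use has_integral_powr_from_0[of "-\<beta>" r] b r in auto)
  finally show ?thesis by simp
qed

lemma sym_int:
  assumes b: "0 < \<beta>" "\<beta> < 1" and r: "0 \<le> r"
  shows "(\<integral>\<^sup>+u. kern \<beta> (u::real) * indicator {-r..r} u \<partial>lborel) \<le> 2 * ennreal (r powr (1-\<beta>) / (1-\<beta>))"
proof -
  have A: "(\<integral>\<^sup>+u. kern \<beta> (u::real) * indicator {-r..r} u \<partial>lborel) \<le>
        (\<integral>\<^sup>+u. kern \<beta> (u::real) * indicator {0..r} u \<partial>lborel) + (\<integral>\<^sup>+u. kern \<beta> (u::real) * indicator {-r..0} u \<partial>lborel)"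
  proof -
    have "(\<integral>\<^sup>+u. kern \<beta> (u::real) * indicator {-r..r} u \<partial>lborel) \<le>
        (\<integral>\<^sup>+u. kern \<beta> (u::real) * indicator {0..r} u + kern \<beta> (u::real) * indicator {-r..0} u \<partial>lborel)"
      by (intro nn_integral_mono) (auto simp: indicator_def)
    also have "\<dots> = (\<integral>\<^sup>+u. kern \<beta> (u::real) * indicator {0..r} u \<partial>lborel) + (\<integral>\<^sup>+u. kern \<beta> (u::real) * indicator {-r..0} u \<partial>lborel)"
      by (rule nn_integral_add) auto
    finally show ?thesis .
  qed
  have B1: "(\<integral>\<^sup>+u. kern \<beta> (u::real) * indicator {-r..0} u \<partial>lborel) = 
     ennreal \<bar>-1\<bar> * (\<integral>\<^sup>+u. kern \<beta> (0 + (-1) * u::real) * indicator {-r..0} (0 + (-1) * u) \<partial>lborel)"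
    by (rule nn_integral_real_affine) auto
  have pw: "\<And>u::real. kern \<beta> (0 + (-1)*u) * indicator {-r..0} (0 + (-1)*u) = kern \<beta> u * indicator {0..r} u"
    by (auto simp: kern_def indicator_def)
  have B: "(\<integral>\<^sup>+u. kern \<beta> (u::real) * indicator {-r..0} u \<partial>lborel) = (\<integral>\<^sup>+u. kern \<beta> (u::real) * indicator {0..r} u \<partial>lborel)"
    unfolding B1 by (simp only: pw) simp
  show ?thesis using A unfolding B half_int[OF b r] by (simp add: mult_2)
qed

lemma one_dim:
  assumes b: "0 < \<beta>" "\<beta> < 1" and s: "s \<noteq> 0"
  shows "(\<integral>\<^sup>+t. indicator {-1..1} t * kern \<beta> (c + s * t::real) \<partial>lborel)
          \<le> ennreal (2 / (1-\<beta>) + 2) * ennreal (\<bar>s\<bar> powr (-\<beta>))"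
proof -
  define r where "r = \<bar>s\<bar>"
  have r: "0 < r" using s by (simp add: r_def)
  define f where "f u = indicator {c-r..c+r} u * kern \<beta> (u::real)" for u
  have fm[measurable]: "f \<in> borel_measurable borel" unfolding f_def by measurable
  have "(\<integral>\<^sup>+u. f u \<partial>lborel) = ennreal \<bar>s\<bar> * (\<integral>\<^sup>+t. f (c + s * t) \<partial>lborel)"
    by (rule nn_integral_real_affine[OF fm s])
  also have "(\<lambda>t. f (c + s * t)) = (\<lambda>t. indicator {-1..1} t * kern \<beta> (c + s * t))"
  proof
    fix t
    have "c + s * t \<in> {c-r..c+r} \<longleftrightarrow> \<bar>s * t\<bar> \<le> r" by (auto simp: abs_le_iff)
    also have "\<dots> \<longleftrightarrow> \<bar>t\<bar> \<le> 1" using s by (simp add: r_def abs_mult)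
    also have "\<dots> \<longleftrightarrow> t \<in> {-1..1}" by auto
    finally have "c + s * t \<in> {c-r..c+r} \<longleftrightarrow> t \<in> {-1..1}" .
    then show "f (c + s * t) = indicator {-1..1} t * kern \<beta> (c + s * t)"
      by (simp add: f_def indicator_def)
  qed
  finally have eq: "(\<integral>\<^sup>+u. f u \<partial>lborel) = ennreal r * (\<integral>\<^sup>+t. indicator {-1..1} t * kern \<beta> (c + s * t) \<partial>lborel)"
    by (simp add: r_def)
  have "(\<integral>\<^sup>+u. f u \<partial>lborel) \<le> (\<integral>\<^sup>+u. kern \<beta> u * indicator {-r..r} u + ennreal (r powr (-\<beta>)) * indicator {c-r..c+r} u \<partial>lborel)"
  proof (intro nn_integral_mono)
    fix u :: real
    show "f u \<le> kern \<beta> u * indicator {-r..r} u + ennreal (r powr (-\<beta>)) * indicator {c-r..c+r} u"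
    proof (cases "u \<in> {-r..r}")
      case True then show ?thesis by (auto simp: f_def indicator_def)
    next
      case False
      then have "r < \<bar>u\<bar>" by auto
      then have "\<bar>u\<bar> powr (-\<beta>) \<le> r powr (-\<beta>)" using r b by (intro powr_mono2') auto
      then show ?thesis using False r by (auto simp: f_def indicator_def kern_def)
    qed
  qed
  also have "\<dots> = (\<integral>\<^sup>+u. kern \<beta> u * indicator {-r..r} u \<partial>lborel) + (\<integral>\<^sup>+u. ennreal (r powr (-\<beta>)) * indicator {c-r..c+r} u \<partial>lborel)"
    by (rule nn_integral_add) auto
  also have "\<dots> \<le> 2 * ennreal (r powr (1-\<beta>) / (1-\<beta>)) + ennreal (r powr (-\<beta>)) * ennreal (2 * r)"
    using sym_int[OF b, of r] r by (intro add_mono) (auto simp: nn_integral_cmult_indicator)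
  also have "\<dots> = ennreal r * (ennreal (2 / (1-\<beta>) + 2) * ennreal (r powr (-\<beta>)))"
  proof -
    have "r powr (1-\<beta>) = r * r powr (-\<beta>)" using r by (simp add: powr_diff powr_minus divide_inverse)
    then have "2 * (r powr (1-\<beta>) / (1-\<beta>)) + r powr (-\<beta>) * (2 * r) = r * ((2 / (1-\<beta>) + 2) * r powr (-\<beta>))"
      by (simp add: field_simps)
    moreover have "2 * ennreal (r powr (1-\<beta>) / (1-\<beta>)) + ennreal (r powr (-\<beta>)) * ennreal (2 * r)
       = ennreal (2 * (r powr (1-\<beta>) / (1-\<beta>)) + r powr (-\<beta>) * (2 * r))"
    proof -
      have e2: "2 * ennreal (r powr (1-\<beta>) / (1-\<beta>)) = ennreal (2 * (r powr (1-\<beta>) / (1-\<beta>)))"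
        using ennreal_mult[of 2 "r powr (1-\<beta>)/(1-\<beta>)"] b by simp
      have e3: "ennreal (r powr (-\<beta>)) * ennreal (2 * r) = ennreal (r powr (-\<beta>) * (2 * r))"
        using r by (simp add: ennreal_mult)
      show ?thesis unfolding e2 e3 using r b by (subst ennreal_plus) auto
    qed
    moreover have "ennreal r * (ennreal (2 / (1-\<beta>) + 2) * ennreal (r powr (-\<beta>))) = ennreal (r * ((2 / (1-\<beta>) + 2) * r powr (-\<beta>)))"
    proof -
      have c0: "0 \<le> 2/(1-\<beta>)+2" using b by simp
      have "ennreal (r * ((2 / (1-\<beta>) + 2) * r powr (-\<beta>))) = ennreal r * ennreal ((2 / (1-\<beta>) + 2) * r powr (-\<beta>))"
        using r c0 by (intro ennreal_mult) auto
      also have "ennreal ((2 / (1-\<beta>) + 2) * r powr (-\<beta>)) = ennreal (2 / (1-\<beta>) + 2) * ennreal (r powr (-\<beta>))"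
        using c0 by (intro ennreal_mult) auto
      finally show ?thesis by simp
    qed
    ultimately show ?thesis by simp
  qed
  finally have "ennreal r * (\<integral>\<^sup>+t. indicator {-1..1} t * kern \<beta> (c + s * t) \<partial>lborel) \<le>
                ennreal r * (ennreal (2 / (1-\<beta>) + 2) * ennreal (r powr (-\<beta>)))" using eq by simp
  then show ?thesis using r by (simp add: r_def ennreal_mult_le_mult_iff)
qed


lemma powr_pow_DIM:
  assumes "0 < x" "n > 0"
  shows "(x powr (- (a / real n))) ^ n = x powr (- a)"
proof -
  have "(x powr (- (a / real n))) ^ n = (x powr (- (a / real n))) powr (real n)"
    using assms by (simp add: powr_realpow)
  also have "\<dots> = x powr (- a)" using assms by (simp add: powr_powr)
  finally show ?thesis .
qed

lemma prod_mono_ennreal: "(\<And>i. i \<in> A \<Longrightarrow> f i \<le> g i) \<Longrightarrow> prod f A \<le> (prod g A :: ennreal)"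
  by (induct A rule: infinite_finite_induct) (auto intro!: mult_mono)

lemma kern_prod:
  fixes u :: "'e::euclidean_space"
  assumes \<alpha>: "0 < \<alpha>"
  shows "kern \<alpha> u \<le> (\<Prod>j\<in>Basis. kern (\<alpha> / DIM('e)) (u \<bullet> j))"
proof (cases "u = 0")
  case True
  then show ?thesis by (simp add: kern_def)
next
  case False
  let ?\<beta> = "\<alpha> / DIM('e)"
  have nu: "0 < norm u" using False by simp
  have "(\<Prod>j\<in>(Basis::'e set). ennreal (norm u powr (- ?\<beta>))) \<le> (\<Prod>j\<in>Basis. kern ?\<beta> (u \<bullet> j))"
  proof (rule prod_mono_ennreal)
    fix j :: 'e assume j: "j \<in> Basis"
    show "ennreal (norm u powr (- ?\<beta>)) \<le> kern ?\<beta> (u \<bullet> j)"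
    proof (cases "u \<bullet> j = 0")
      case True then show ?thesis by (simp add: kern_def)
    next
      case False
      have "\<bar>u \<bullet> j\<bar> \<le> norm u" using j by (rule Basis_le_norm)
      then have "norm u powr (- ?\<beta>) \<le> \<bar>u \<bullet> j\<bar> powr (- ?\<beta>)"
        using False \<alpha> by (intro powr_mono2') (auto simp: divide_nonneg_pos)
      then show ?thesis using False by (simp add: kern_def)
    qed
  qed
  moreover have "(\<Prod>j\<in>(Basis::'e set). ennreal (norm u powr (- ?\<beta>))) = ennreal (norm u powr (- \<alpha>))"
  proof -
    have "(\<Prod>j\<in>(Basis::'e set). ennreal (norm u powr (- ?\<beta>))) = ennreal (norm u powr (- ?\<beta>)) ^ DIM('e)"
      by (simp add: prod_constant)
    also have "\<dots> = ennreal ((norm u powr (- ?\<beta>)) ^ DIM('e))" by (simp add: ennreal_power)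
    also have "(norm u powr (- ?\<beta>)) ^ DIM('e) = norm u powr (- \<alpha>)"
      using powr_pow_DIM[OF nu, of "DIM('e)" \<alpha>] by simp
    finally show ?thesis .
  qed
  ultimately show ?thesis using False by (simp add: kern_def)
qed


lemma ndim:
  fixes b :: "'e::euclidean_space" and \<alpha> s :: real
  assumes \<alpha>: "0 < \<alpha>" "\<alpha> < DIM('e)" and s: "s \<noteq> 0"
  shows "(\<integral>\<^sup>+w. indicator {w. \<forall>j\<in>Basis. \<bar>w \<bullet> j\<bar> \<le> 1} w * kern \<alpha> (b + s *\<^sub>R w) \<partial>lborel)
     \<le> ennreal ((2 / (1 - \<alpha> / DIM('e)) + 2) ^ DIM('e)) * ennreal (\<bar>s\<bar> powr (- \<alpha>))"
proof -
  define \<beta> where "\<beta> = \<alpha> / DIM('e)"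
  have \<beta>: "0 < \<beta>" "\<beta> < 1" using \<alpha> by (auto simp: \<beta>_def divide_less_eq)
  define C1 where "C1 = 2 / (1 - \<beta>) + 2"
  have C1: "0 \<le> C1" using \<beta> by (simp add: C1_def)
  have "(\<integral>\<^sup>+w. indicator {w. \<forall>j\<in>Basis. \<bar>w \<bullet> j\<bar> \<le> 1} w * kern \<alpha> (b + s *\<^sub>R w) \<partial>lborel)
     \<le> (\<integral>\<^sup>+w. (\<Prod>j\<in>Basis. indicator {-1..1} (w \<bullet> j) * kern \<beta> (b \<bullet> j + s * (w \<bullet> j))) \<partial>lborel)"
  proof (intro nn_integral_mono)
    fix w :: 'e
    show "indicator {w. \<forall>j\<in>Basis. \<bar>w \<bullet> j\<bar> \<le> 1} w * kern \<alpha> (b + s *\<^sub>R w)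
       \<le> (\<Prod>j\<in>Basis. indicator {-1..1} (w \<bullet> j) * kern \<beta> (b \<bullet> j + s * (w \<bullet> j)))"
    proof (cases "\<forall>j\<in>Basis. \<bar>w \<bullet> j\<bar> \<le> 1")
      case True
      have "kern \<alpha> (b + s *\<^sub>R w) \<le> (\<Prod>j\<in>Basis. kern \<beta> ((b + s *\<^sub>R w) \<bullet> j))"
        unfolding \<beta>_def by (rule kern_prod[OF \<alpha>(1)])
      also have "\<dots> = (\<Prod>j\<in>Basis. indicator {-1..1} (w \<bullet> j) * kern \<beta> (b \<bullet> j + s * (w \<bullet> j)))"
        using True by (intro prod.cong) (auto simp: inner_add_left indicator_def abs_le_iff)
      finally show ?thesis using True by simp
    qed simp
  qed
  also have "\<dots> = (\<Prod>j\<in>Basis. (\<integral>\<^sup>+x. indicator {-1..1} x * kern \<beta> (b \<bullet> j + s * x) \<partial>lborel))"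
    by (rule nn_integral_lborel_prod) auto
  also have "\<dots> \<le> (\<Prod>j\<in>(Basis::'e set). ennreal C1 * ennreal (\<bar>s\<bar> powr (-\<beta>)))"
    by (rule prod_mono_ennreal) (unfold C1_def, rule one_dim[OF \<beta> s])
  also have "\<dots> = ennreal (C1 ^ DIM('e)) * ennreal (\<bar>s\<bar> powr (- \<alpha>))"
  proof -
    have sp: "0 < \<bar>s\<bar>" using s by simp
    have "(\<Prod>j\<in>(Basis::'e set). ennreal C1 * ennreal (\<bar>s\<bar> powr (-\<beta>))) = (ennreal C1 * ennreal (\<bar>s\<bar> powr (-\<beta>))) ^ DIM('e)"
      by (simp add: prod_constant)
    also have "\<dots> = ennreal C1 ^ DIM('e) * ennreal (\<bar>s\<bar> powr (-\<beta>)) ^ DIM('e)" by (simp add: power_mult_distrib)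
    also have "\<dots> = ennreal (C1 ^ DIM('e)) * ennreal ((\<bar>s\<bar> powr (-\<beta>)) ^ DIM('e))"
      using C1 by (simp add: ennreal_power)
    also have "(\<bar>s\<bar> powr (-\<beta>)) ^ DIM('e) = \<bar>s\<bar> powr (- \<alpha>)"
      unfolding \<beta>_def using powr_pow_DIM[OF sp, of "DIM('e)" \<alpha>] by simp
    finally show ?thesis .
  qed
  finally show ?thesis by (simp add: C1_def \<beta>_def)
qed

lemma mv_cont: "continuous_on UNIV (\<lambda>p::((real^'n^'m) \<times> (real^'n)). fst p *v snd p)"
  unfolding matrix_vector_mult_def by (intro continuous_intros)

lemma borel_measurable_mv[measurable (raw)]:
  fixes f :: "'a \<Rightarrow> real^'n^'m" and g :: "'a \<Rightarrow> real^'n"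
  assumes "f \<in> borel_measurable M" "g \<in> borel_measurable M"
  shows "(\<lambda>x. f x *v g x) \<in> borel_measurable M"
proof -
  have "(\<lambda>p::((real^'n^'m) \<times> (real^'n)). fst p *v snd p) \<in> borel_measurable borel"
    by (rule borel_measurable_continuous_onI[OF mv_cont])
  then have "(\<lambda>p::((real^'n^'m) \<times> (real^'n)). fst p *v snd p) \<in> borel_measurable (borel \<Otimes>\<^sub>M borel)"
    by (simp add: borel_prod)
  from measurable_compose[OF measurable_Pair[OF assms] this] show ?thesis by simp
qed

lemma borel_measurable_vec_nth[measurable (raw)]:
  fixes f :: "'a \<Rightarrow> 'b::real_normed_vector^'n"
  assumes "f \<in> borel_measurable M"
  shows "(\<lambda>x. f x $ i) \<in> borel_measurable M"
proof -
  have "(\<lambda>x::'b^'n. x $ i) \<in> borel_measurable borel"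
    by (rule borel_measurable_continuous_onI) (intro continuous_intros)
  from measurable_compose[OF assms this] show ?thesis .
qed

definition Wk :: "'n \<Rightarrow> real^'n \<Rightarrow> real^'n^'n" where
  "Wk k w = (\<chi> i j. (if j = k then 1 else 0) * w $ i)"

lemma Wk_cont: "continuous_on UNIV (Wk k)"
  unfolding Wk_def by (intro continuous_intros)

lemma borel_measurable_Wk[measurable (raw)]:
  assumes "f \<in> borel_measurable M"
  shows "(\<lambda>x. Wk k (f x)) \<in> borel_measurable M"
  using measurable_compose[OF assms borel_measurable_continuous_onI[OF Wk_cont]] .

lemma Wk_mult: "(Wk k w + L) *v v = L *v v + v $ k *\<^sub>R w"
proof -
  have "(Wk k w *v v) $ i = v $ k * w $ i" for i
  proof -
    have "(Wk k w *v v) $ i = (\<Sum>j\<in>UNIV. (if j = k then 1 else 0) * w $ i * v $ j)"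
      unfolding matrix_vector_mult_def Wk_def by simp
    also have "\<dots> = (\<Sum>j\<in>UNIV. (if j = k then v $ k * w $ i else 0))"
      by (rule sum.cong) auto
    also have "\<dots> = v $ k * w $ i" by simp
    finally show ?thesis .
  qed
  then have "Wk k w *v v = v $ k *\<^sub>R w" by (simp add: vec_eq_iff)
  then show ?thesis by (simp add: matrix_vector_mult_add_rdistrib add.commute)
qed

lemma Z_meas[measurable]: "{L::real^'n^'n. \<forall>i j. \<bar>L$i$j\<bar> \<le> c} \<in> sets borel"
  by measurable

lemma Z_bounded: "bounded {L::real^'n^'n. \<forall>i j. \<bar>L$i$j\<bar> \<le> c}"
proof -
  have "{L::real^'n^'n. \<forall>i j. \<bar>L$i$j\<bar> \<le> c} \<subseteq> cbox (- c *\<^sub>R One) (c *\<^sub>R One)"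
  proof
    fix L :: "real^'n^'n" assume L: "L \<in> {L. \<forall>i j. \<bar>L$i$j\<bar> \<le> c}"
    show "L \<in> cbox (- c *\<^sub>R One) (c *\<^sub>R One)"
      unfolding mem_box
    proof
      fix b :: "real^'n^'n" assume b: "b \<in> Basis"
      then obtain i u where u: "u \<in> (Basis :: (real^'n) set)" and bu: "b = axis i u" unfolding Basis_vec_def by auto
      then obtain j where "u = axis j 1" unfolding Basis_vec_def by auto
      then have Lb: "L \<bullet> b = L $ i $ j" using bu by (simp add: inner_axis)
      have "\<bar>L $ i $ j\<bar> \<le> c" using L by auto
      then have "- c \<le> L $ i $ j" "L $ i $ j \<le> c" by auto
      then show "(- c *\<^sub>R One) \<bullet> b \<le> L \<bullet> b \<and> L \<bullet> b \<le> (c *\<^sub>R One) \<bullet> b"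
        using Lb b by simp
    qed
  qed
  then show ?thesis by (rule bounded_subset[rotated]) simp
qed


lemma matrix_key:
  fixes \<alpha> :: real
  assumes \<alpha>: "0 < \<alpha>" "\<alpha> < CARD('n)"
  shows "\<exists>K. K < \<infinity> \<and> (\<forall>(a::real^'n) (v::real^'n).
     (\<integral>\<^sup>+L. indicator {L::real^'n^'n. \<forall>i j. \<bar>L$i$j\<bar> \<le> 1} L * kern \<alpha> (a + L *v v) \<partial>lborel) \<le> K * kern \<alpha> v)"
proof -
  define Z :: "(real^'n^'n) set" where "Z = {L. \<forall>i j. \<bar>L$i$j\<bar> \<le> 1}"
  define Z2 :: "(real^'n^'n) set" where "Z2 = {L. \<forall>i j. \<bar>L$i$j\<bar> \<le> 2}"
  define Q :: "(real^'n) set" where "Q = {w. \<forall>j\<in>Basis. \<bar>w \<bullet> j\<bar> \<le> 1}"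
  define C1N where "C1N = ennreal ((2 / (1 - \<alpha> / DIM(real^'n)) + 2) ^ DIM(real^'n))"
  have Zm[measurable]: "Z \<in> sets borel" "Z2 \<in> sets borel" unfolding Z_def Z2_def by (rule Z_meas)+
  have Qeq: "Q = cbox (-One) One" by (auto simp: Q_def mem_box abs_le_iff)
  have Qm[measurable]: "Q \<in> sets borel" unfolding Qeq by simp
  define q where "q = (2::real) ^ DIM(real^'n)"
  have q: "0 < q" by (simp add: q_def)
  have EQ: "emeasure lborel Q = ennreal q"
  proof -
    have "(\<Prod>b\<in>(Basis::(real^'n) set). (One - (-One)) \<bullet> b) = (\<Prod>b\<in>(Basis::(real^'n) set). 2)"
    proof (rule prod.cong[OF refl])
      fix b :: "real^'n" assume b: "b \<in> Basis"
      have "One \<bullet> b = (1::real)" using b by simp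
      then show "(One - (-One)) \<bullet> b = 2" by (simp only: inner_diff_left inner_minus_left)
    qed
    moreover have "emeasure lborel (cbox (-One) (One::real^'n)) = (\<Prod>b\<in>(Basis::(real^'n) set). (One - (-One)) \<bullet> b)"
      by (rule emeasure_lborel_cbox) auto
    ultimately show ?thesis unfolding Qeq q_def by (simp add: prod_constant)
  qed
  have Z2fin: "emeasure lborel Z2 < \<infinity>" by (rule emeasure_bounded_finite) (simp add: Z2_def Z_bounded)
  define K where "K = ennreal (1/q) * C1N * ennreal (real CARD('n) powr \<alpha>) * emeasure lborel Z2 + 1"
  have Kfin: "K < \<infinity>" using Z2fin by (simp add: K_def C1N_def ennreal_mult_less_top)
  show ?thesis
  proof (intro exI conjI allI)
    show "K < \<infinity>" by (rule Kfin)
    fix a v :: "real^'n"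
    show "(\<integral>\<^sup>+L. indicator {L::real^'n^'n. \<forall>i j. \<bar>L$i$j\<bar> \<le> 1} L * kern \<alpha> (a + L *v v) \<partial>lborel) \<le> K * kern \<alpha> v"
    proof (cases "v = 0")
      case True
      have "K \<noteq> 0" by (simp add: K_def)
      then show ?thesis using True by (simp add: kern_def ennreal_mult_top)
    next
      case False
      obtain k where k: "\<And>j. \<bar>v$j\<bar> \<le> \<bar>v$k\<bar>"
      proof -
        let ?m = "Max (range (\<lambda>j. \<bar>v$j\<bar>))"
        have "?m \<in> range (\<lambda>j. \<bar>v$j\<bar>)" by (intro Max_in) auto
        then obtain k where "?m = \<bar>v$k\<bar>" by (metis (no_types, lifting) imageE)
        moreover have "\<bar>v$j\<bar> \<le> ?m" for j by (intro Max_ge) auto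
        ultimately show ?thesis using that by metis
      qed
      have vk: "v$k \<noteq> 0"
      proof
        assume "v$k = 0"
        then have "v$j = 0" for j using k[of j] by simp
        then show False using False by (simp add: vec_eq_iff)
      qed
      have nv0: "0 < norm v" using False by simp
      have nv: "norm v \<le> real CARD('n) * \<bar>v$k\<bar>"
      proof -
        have "norm v \<le> (\<Sum>j\<in>UNIV. \<bar>v$j\<bar>)" by (rule norm_le_l1_cart)
        also have "\<dots> \<le> (\<Sum>j\<in>(UNIV::'n set). \<bar>v$k\<bar>)" by (intro sum_mono k)
        finally show ?thesis by simp
      qed
      have pv: "\<bar>v$k\<bar> powr (-\<alpha>) \<le> real CARD('n) powr \<alpha> * norm v powr (-\<alpha>)"
      proof -
        have c0: "0 < real CARD('n)" by simp
        have "norm v / real CARD('n) \<le> \<bar>v$k\<bar>" using nv c0 by (simp add: divide_le_eq mult.commute)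
        then have "\<bar>v$k\<bar> powr (-\<alpha>) \<le> (norm v / real CARD('n)) powr (-\<alpha>)"
          using nv0 c0 \<alpha> by (intro powr_mono2') auto
        also have "\<dots> = norm v powr (-\<alpha>) / real CARD('n) powr (-\<alpha>)"
          by (rule powr_divide)
        also have "\<dots> = real CARD('n) powr \<alpha> * norm v powr (-\<alpha>)"
          by (simp add: powr_minus divide_inverse mult.commute)
        finally show ?thesis .
      qed
      define h where "h L = indicator Z L * kern \<alpha> (a + L *v v)" for L
      have hm[measurable]: "h \<in> borel_measurable borel" unfolding h_def by measurable
      have shift: "(\<integral>\<^sup>+L. h L \<partial>lborel) = (\<integral>\<^sup>+L. h (Wk k w + L) \<partial>lborel)" for w
      proof -
        have "(\<integral>\<^sup>+L. h L \<partial>lborel) = (\<integral>\<^sup>+L. h L \<partial>(distr lborel borel ((+) (Wk k w))))"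
          by (simp add: lborel_distr_plus)
        also have "\<dots> = (\<integral>\<^sup>+L. h (Wk k w + L) \<partial>lborel)" by (rule nn_integral_distr) auto
        finally show ?thesis .
      qed
      have "(\<integral>\<^sup>+L. h L \<partial>lborel) * emeasure lborel Q = (\<integral>\<^sup>+w. (\<integral>\<^sup>+L. h L \<partial>lborel) * indicator Q w \<partial>lborel)"
        by (rule nn_integral_cmult_indicator[symmetric]) simp
      also have "\<dots> = (\<integral>\<^sup>+w. (\<integral>\<^sup>+L. indicator Q w * h (Wk k w + L) \<partial>lborel) \<partial>lborel)"
      proof (intro nn_integral_cong)
        fix w :: "real^'n"
        have "(\<integral>\<^sup>+L. h L \<partial>lborel) * indicator Q w = (\<integral>\<^sup>+L. h (Wk k w + L) \<partial>lborel) * indicator Q w"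
          by (simp only: shift[of w])
        also have "\<dots> = (\<integral>\<^sup>+L. h (Wk k w + L) * indicator Q w \<partial>lborel)"
          by (rule nn_integral_multc[symmetric]) measurable
        finally show "(\<integral>\<^sup>+L. h L \<partial>lborel) * indicator Q w = (\<integral>\<^sup>+L. indicator Q w * h (Wk k w + L) \<partial>lborel)"
          by (simp add: mult.commute)
      qed
      also have "\<dots> = (\<integral>\<^sup>+L. (\<integral>\<^sup>+w. indicator Q w * h (Wk k w + L) \<partial>lborel) \<partial>lborel)"
        by (rule lborel_pair.Fubini') measurable
      also have "\<dots> \<le> (\<integral>\<^sup>+L. indicator Z2 L * (C1N * ennreal (\<bar>v$k\<bar> powr (-\<alpha>))) \<partial>lborel)"
      proof (intro nn_integral_mono)
        fix L :: "real^'n^'n"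
        have "(\<integral>\<^sup>+w. indicator Q w * h (Wk k w + L) \<partial>lborel)
            \<le> (\<integral>\<^sup>+w. indicator Z2 L * (indicator Q w * kern \<alpha> ((a + L *v v) + v$k *\<^sub>R w)) \<partial>lborel)"
        proof (intro nn_integral_mono)
          fix w :: "real^'n"
          show "indicator Q w * h (Wk k w + L) \<le> indicator Z2 L * (indicator Q w * kern \<alpha> ((a + L *v v) + v$k *\<^sub>R w))"
          proof (cases "w \<in> Q \<and> Wk k w + L \<in> Z")
            case True
            have "L \<in> Z2" unfolding Z2_def
            proof (intro CollectI allI)
              fix i j
              have w1: "\<bar>w$i\<bar> \<le> 1" using True unfolding Q_def
                by (metis (mono_tags, lifting) axis_in_Basis_iff inner_axis mem_Collect_eq real_inner_1_right Basis_real_def insertI1)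
              have "\<bar>(Wk k w + L)$i$j\<bar> \<le> 1" using True by (auto simp: Z_def)
              moreover have "\<bar>(Wk k w)$i$j\<bar> \<le> 1" using w1 by (auto simp: Wk_def)
              ultimately show "\<bar>L$i$j\<bar> \<le> 2" by auto
            qed
            then show ?thesis using True by (simp add: h_def Wk_mult add.assoc)
          next
            case False
            then show ?thesis by (auto simp: h_def)
          qed
        qed
        also have "\<dots> = indicator Z2 L * (\<integral>\<^sup>+w. indicator Q w * kern \<alpha> ((a + L *v v) + v$k *\<^sub>R w) \<partial>lborel)"
          by (rule nn_integral_cmult) measurable
        also have "\<dots> \<le> indicator Z2 L * (C1N * ennreal (\<bar>v$k\<bar> powr (-\<alpha>)))"
        proof (intro mult_left_mono)
          show "(\<integral>\<^sup>+w. indicator Q w * kern \<alpha> ((a + L *v v) + v$k *\<^sub>R w) \<partial>lborel) \<le> C1N * ennreal (\<bar>v$k\<bar> powr (-\<alpha>))"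
            unfolding Q_def C1N_def by (rule ndim) (use \<alpha> vk in auto)
        qed auto
        finally show "(\<integral>\<^sup>+w. indicator Q w * h (Wk k w + L) \<partial>lborel) \<le> indicator Z2 L * (C1N * ennreal (\<bar>v$k\<bar> powr (-\<alpha>)))" .
      qed
      also have "\<dots> = C1N * ennreal (\<bar>v$k\<bar> powr (-\<alpha>)) * emeasure lborel Z2"
        by (subst mult.commute, rule nn_integral_cmult_indicator) simp
      finally have 1: "(\<integral>\<^sup>+L. h L \<partial>lborel) * ennreal q \<le> C1N * ennreal (\<bar>v$k\<bar> powr (-\<alpha>)) * emeasure lborel Z2"
        using EQ by simp
      have "(\<integral>\<^sup>+L. h L \<partial>lborel) = ennreal (1/q) * ((\<integral>\<^sup>+L. h L \<partial>lborel) * ennreal q)"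
        using q by (simp add: mult.assoc[symmetric] ennreal_mult'[symmetric] mult.commute)
      also have "\<dots> \<le> ennreal (1/q) * (C1N * ennreal (\<bar>v$k\<bar> powr (-\<alpha>)) * emeasure lborel Z2)"
        using 1 by (intro mult_left_mono) auto
      also have "\<dots> \<le> ennreal (1/q) * (C1N * ennreal (real CARD('n) powr \<alpha> * norm v powr (-\<alpha>)) * emeasure lborel Z2)"
        using pv by (intro mult_left_mono mult_right_mono) auto
      also have "\<dots> = (ennreal (1/q) * C1N * ennreal (real CARD('n) powr \<alpha>) * emeasure lborel Z2) * ennreal (norm v powr (-\<alpha>))"
        by (simp add: ennreal_mult ac_simps)
      also have "\<dots> \<le> K * ennreal (norm v powr (-\<alpha>))"
        unfolding K_def by (intro mult_right_mono) auto
      finally show ?thesis using False by (simp add: h_def Z_def kern_def)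
    qed
  qed
qed


theorem lemma4p4:
  fixes \<mu> :: "'a::metric_space measure" and \<nu> :: "'a measure"
    and Q p \<alpha>' :: real and E :: "'a set"
    and g :: "'a \<Rightarrow> real ^ 'n"
  assumes "sets \<mu> = sets borel"
    and "locally_ahlfors_regular \<mu> Q"
    and "p > Q"
    and "compact E"
    and "sets \<nu> = sets borel" and "finite_measure \<nu>" and "emeasure \<nu> (space \<nu>) \<noteq> 0"
    and "emeasure \<nu> (UNIV - E) = 0"
    and "0 < \<alpha>'" and "\<alpha>' < real CARD('n)"
    and "g \<in> newtonian \<mu> p"
    and "(\<integral>\<^sup>+ x. (\<integral>\<^sup>+ y. (if g x = g y then \<infinity>
                            else ennreal (norm (g x - g y) powr (- \<alpha>'))) \<partial>\<nu>) \<partial>\<nu>) < \<infinity>"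
  shows "\<forall>f0 \<in> newtonian \<mu> p.
           AE L in (lborel :: (real ^ 'n ^ 'n) measure).
             (\<forall>i j. \<bar>L $ i $ j\<bar> \<le> 1) \<longrightarrow>
               hausdorff_dim ((\<lambda>x. f0 x + L *v g x) ` E) \<ge> ereal \<alpha>'"
proof
  note asm = assms
  fix f0 :: "'a \<Rightarrow> real^'n" assume f0: "f0 \<in> newtonian \<mu> p"
  interpret finite_measure \<nu> by (rule asm(6))
  have f0b: "f0 \<in> borel_measurable borel"
    using f0 measurable_cong_sets[OF asm(1) refl] by (auto simp: newtonian_def)
  have gb: "g \<in> borel_measurable borel"
    using asm(11) measurable_cong_sets[OF asm(1) refl] by (auto simp: newtonian_def)
  have f0m[measurable]: "f0 \<in> borel_measurable \<nu>"
    using f0b measurable_cong_sets[OF asm(5) refl] by blast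
  have gm[measurable]: "g \<in> borel_measurable \<nu>"
    using gb measurable_cong_sets[OF asm(5) refl] by blast
  obtain K where Kfin: "K < \<infinity>" and K: "\<And>(a::real^'n) (v::real^'n).
     (\<integral>\<^sup>+L. indicator {L::real^'n^'n. \<forall>i j. \<bar>L$i$j\<bar> \<le> 1} L * kern \<alpha>' (a + L *v v) \<partial>lborel) \<le> K * kern \<alpha>' v"
    using matrix_key[OF asm(9) asm(10)] by blast
  define Z :: "(real^'n^'n) set" where "Z = {L. \<forall>i j. \<bar>L$i$j\<bar> \<le> 1}"
  have Zm[measurable]: "Z \<in> sets borel" unfolding Z_def by (rule Z_meas)
  define En where "En L = (\<integral>\<^sup>+x. (\<integral>\<^sup>+y. kern \<alpha>' ((f0 x + L *v g x) - (f0 y + L *v g y)) \<partial>\<nu>) \<partial>\<nu>)"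
    for L :: "real^'n^'n"
  have Enm[measurable]: "En \<in> borel_measurable lborel" unfolding En_def by measurable
  have PS: "pair_sigma_finite (lborel::(real^'n^'n) measure) \<nu>"
    by (simp add: pair_sigma_finite_def sigma_finite_lborel sigma_finite_measure_axioms)
  have eqd: "(f0 x + L *v g x) - (f0 y + L *v g y) = (f0 x - f0 y) + L *v (g x - g y)" for x y and L :: "real^'n^'n"
    by (simp add: matrix_vector_mult_diff_distrib algebra_simps)
  have "(\<integral>\<^sup>+L. indicator Z L * En L \<partial>lborel) =
        (\<integral>\<^sup>+L. (\<integral>\<^sup>+x. (\<integral>\<^sup>+y. indicator Z L * kern \<alpha>' ((f0 x + L *v g x) - (f0 y + L *v g y)) \<partial>\<nu>) \<partial>\<nu>) \<partial>lborel)"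
  proof (intro nn_integral_cong)
    fix L :: "real^'n^'n"
    have "indicator Z L * En L = (\<integral>\<^sup>+x. indicator Z L * (\<integral>\<^sup>+y. kern \<alpha>' ((f0 x + L *v g x) - (f0 y + L *v g y)) \<partial>\<nu>) \<partial>\<nu>)"
      unfolding En_def by (rule nn_integral_cmult[symmetric]) measurable
    also have "\<dots> = (\<integral>\<^sup>+x. (\<integral>\<^sup>+y. indicator Z L * kern \<alpha>' ((f0 x + L *v g x) - (f0 y + L *v g y)) \<partial>\<nu>) \<partial>\<nu>)"
      by (intro nn_integral_cong nn_integral_cmult[symmetric]) measurable
    finally show "indicator Z L * En L = (\<integral>\<^sup>+x. (\<integral>\<^sup>+y. indicator Z L * kern \<alpha>' ((f0 x + L *v g x) - (f0 y + L *v g y)) \<partial>\<nu>) \<partial>\<nu>)" .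
  qed
  also have "\<dots> = (\<integral>\<^sup>+x. (\<integral>\<^sup>+L. (\<integral>\<^sup>+y. indicator Z L * kern \<alpha>' ((f0 x + L *v g x) - (f0 y + L *v g y)) \<partial>\<nu>) \<partial>lborel) \<partial>\<nu>)"
    by (rule pair_sigma_finite.Fubini'[OF PS, symmetric]) measurable
  also have "\<dots> = (\<integral>\<^sup>+x. (\<integral>\<^sup>+y. (\<integral>\<^sup>+L. indicator Z L * kern \<alpha>' ((f0 x + L *v g x) - (f0 y + L *v g y)) \<partial>lborel) \<partial>\<nu>) \<partial>\<nu>)"
    by (intro nn_integral_cong pair_sigma_finite.Fubini'[OF PS, symmetric]) measurable
  also have "\<dots> \<le> (\<integral>\<^sup>+x. (\<integral>\<^sup>+y. K * kern \<alpha>' (g x - g y) \<partial>\<nu>) \<partial>\<nu>)"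
    by (intro nn_integral_mono) (unfold eqd Z_def, rule K)
  also have "\<dots> = K * (\<integral>\<^sup>+x. (\<integral>\<^sup>+y. kern \<alpha>' (g x - g y) \<partial>\<nu>) \<partial>\<nu>)"
  proof -
    have "(\<integral>\<^sup>+x. (\<integral>\<^sup>+y. K * kern \<alpha>' (g x - g y) \<partial>\<nu>) \<partial>\<nu>) = (\<integral>\<^sup>+x. K * (\<integral>\<^sup>+y. kern \<alpha>' (g x - g y) \<partial>\<nu>) \<partial>\<nu>)"
      by (intro nn_integral_cong nn_integral_cmult) measurable
    also have "\<dots> = K * (\<integral>\<^sup>+x. (\<integral>\<^sup>+y. kern \<alpha>' (g x - g y) \<partial>\<nu>) \<partial>\<nu>)"
      by (rule nn_integral_cmult) measurable
    finally show ?thesis .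
  qed
  also have "(\<integral>\<^sup>+x. (\<integral>\<^sup>+y. kern \<alpha>' (g x - g y) \<partial>\<nu>) \<partial>\<nu>) = (\<integral>\<^sup>+ x. (\<integral>\<^sup>+ y. (if g x = g y then \<infinity>
                            else ennreal (norm (g x - g y) powr (- \<alpha>'))) \<partial>\<nu>) \<partial>\<nu>)"
    by (simp add: kern_def)
  finally have fin: "(\<integral>\<^sup>+L. indicator Z L * En L \<partial>lborel) < \<infinity>"
    using asm(12) Kfin by (simp add: ennreal_mult_less_top le_less_trans)
  have "AE L in lborel. indicator Z L * En L \<noteq> \<infinity>"
    by (rule nn_integral_PInf_AE) (use fin in auto)
  then show "AE L in (lborel :: (real ^ 'n ^ 'n) measure).
             (\<forall>i j. \<bar>L $ i $ j\<bar> \<le> 1) \<longrightarrow> hausdorff_dim ((\<lambda>x. f0 x + L *v g x) ` E) \<ge> ereal \<alpha>'"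
  proof (rule AE_mp, intro AE_I2 impI)
    fix L :: "real^'n^'n"
    assume fL: "indicator Z L * En L \<noteq> \<infinity>" and LZ: "\<forall>i j. \<bar>L $ i $ j\<bar> \<le> 1"
    then have EnL: "En L < \<infinity>" by (simp add: Z_def top.not_eq_extremum)
    show "hausdorff_dim ((\<lambda>x. f0 x + L *v g x) ` E) \<ge> ereal \<alpha>'"
    proof (rule mass_dist[OF asm(5) asm(6) asm(7) asm(8) compact_imp_closed[OF asm(4)] _ asm(9)])
      show "(\<lambda>x. f0 x + L *v g x) \<in> borel_measurable borel" using f0b gb by measurable
      show "(\<integral>\<^sup>+x. (\<integral>\<^sup>+y. kern \<alpha>' ((f0 x + L *v g x) - (f0 y + L *v g y)) \<partial>\<nu>) \<partial>\<nu>) < \<infinity>"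
        using EnL by (simp add: En_def)
    qed
  qed
qed

end
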